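(* Let $(r(k))_{k\ge 0}$ be arbitrary elements of a commutative ring, and define $b(n,k)$ for integers $n\ge 0$, $k\ge -1$ by $b(0,k)=[k=0]$, $b(n,-1)=0$, and for $n>0$, $k\ge0$, $b(n,k)=b(n-1,k-1)+r(k)\,b(n-1,k+1)$. Then for every integer $n\ge 0$, $$\sum_{k=0}^{n}(-1)^k\, b(2n,2k)\prod_{j=0}^{k-1} r(2j)=[n=0].$$
   Context: $[P]$ denotes the Iverson bracket. An empty product equals $1$. *)

theory Defs
  imports Main
begin

text \<open>b(n,k) for n \<ge> 0, k \<ge> 0; the paper's boundary value b(n,-1)=0 is built into
  the k = 0 equation of the recursion.\<close>
fun bseq :: "(nat \<Rightarrow> 'a::comm_ring_1) \<Rightarrow> nat \<Rightarrow> nat \<Rightarrow> 'a" where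
  "bseq r 0 k = (if k = 0 then 1 else 0)"
| "bseq r (Suc n) 0 = r 0 * bseq r n 1"
| "bseq r (Suc n) (Suc k) = bseq r n k + r (Suc k) * bseq r n (Suc (Suc k))"

end

theory Submission
  imports Defs
begin

lemma bseq_zero: "m < j \<Longrightarrow> bseq r m j = 0"
proof (induction m arbitrary: j)
  case 0 then show ?case by simp
next
  case (Suc m)
  then obtain j' where j: "j = Suc j'" by (cases j) auto
  have "m < j'" "m < Suc j'" using Suc.prems j by auto
  then show ?case using Suc.IH by (simp add: j)
qed

lemma tele:
  fixes r :: "nat \<Rightarrow> 'a::comm_ring_1"
  fixes m :: nat and g
  assumes g_def: "g = (\<lambda>k. (-1) ^ k * (\<Prod>j<k. r (2 * j)) * (if k = 0 then 0 else bseq r m (2 * k - 1)))"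
  shows "(-1) ^ k * bseq r (Suc m) (2 * k) * (\<Prod>j<k. r (2 * j)) = g k - g (Suc k)"
proof (cases k)
  case 0
  then show ?thesis by (simp add: g_def)
next
  case (Suc k')
  have e: "2 * k = Suc (Suc (2 * k'))" using Suc by simp
  have e2: "2 * Suc k - 1 = Suc (Suc (Suc (2*k')))" using Suc by simp
  have e3: "2 * k - 1 = Suc (2*k')" using Suc by simp
  have p: "(\<Prod>j<Suc k. r (2 * j)) = (\<Prod>j<k. r (2 * j)) * r (2*k)" by simp
  show ?thesis unfolding g_def using Suc
    by (simp only: e e2 e3 p bseq.simps) (simp add: algebra_simps e)
qed

theorem lemma2:
  fixes r :: "nat \<Rightarrow> 'a::comm_ring_1" and n :: nat
  shows "(\<Sum>k = 0..n. (-1) ^ k * bseq r (2 * n) (2 * k) * (\<Prod>j<k. r (2 * j)))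
         = (if n = 0 then 1 else 0)"
proof (cases n)
  case 0 then show ?thesis by simp
next
  case (Suc n')
  define m where "m = Suc (2 * n')"
  have hm: "2 * n = Suc m" using Suc m_def by simp
  define g where "g = (\<lambda>k. (-1) ^ k * (\<Prod>j<k. r (2 * j)) * (if k = 0 then 0 else bseq r m (2 * k - 1)))"
  have "(\<Sum>k = 0..n. (-1) ^ k * bseq r (2 * n) (2 * k) * (\<Prod>j<k. r (2 * j)))
      = (\<Sum>k<Suc n. g k - g (Suc k))"
    unfolding hm using tele[OF g_def]
    by (simp add: atLeast0AtMost lessThan_Suc_atMost)
  also have "\<dots> = - (\<Sum>k<Suc n. g (Suc k) - g k)"
    by (simp add: sum_negf[symmetric])
  also have "\<dots> = g 0 - g (Suc n)" by (simp add: sum_lessThan_telescope)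
  also have "\<dots> = 0" unfolding g_def using bseq_zero[of m "2 * Suc n - 1" r] Suc m_def by simp
  finally show ?thesis using Suc by simp
qed

end
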